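(* The map taking a model to its data is injective on the set of all generic models (of all layer numbers $M\ge1$): if $(\tau,R)$ is a generic $M$-layer model and $(\tau',R')$ is a generic $M'$-layer model with the same data $(\sigma,\alpha)$, then $M=M'$, $\tau=\tau'$ and $R=R'$.
   Context: An $M$-layer model ($M\ge1$) is $(\tau,R)$ with $\tau\in\mathbb{R}^{M+1}_{>0}$, $R\in(-1,1)^{M+1}$. $\mathfrak{L}_M\subset\mathbb{Z}^{M+1}_{\geq0}$: all $k$ with $k_0=1$ and $k_n>0\Rightarrow k_{n-1}>0$ ($1\le n\le M$); $\mathfrak{L}^\tau_M=\{k\in\mathfrak{L}_M:\langle k,\tau\rangle\le\langle\mathbb{1},\tau\rangle\}$. Amplitude polynomial: $\mathbb{1}=(1,\ldots,1)$; inequalities and $\min$ entrywise; $x^k=\prod_n x_n^{k_n}$, $\binom{k}{b}=\prod_n\binom{k_n}{b_n}$; $\tilde k=(k_1,\ldots,k_M,0)$, $u=\min\{\mathbb{1},\tilde k\}$, $V(k)=\{b:u\le b\le\min\{k,\tilde k\}\}$, $a(x,k)=\sum_{b\in V(k)}\binom{k}{b}\binom{\tilde k-u}{b-u}(-x)^{\tilde k-b}x^{k-b}\prod_n(1-x_n^2)^{b_n}$. The data $(\sigma,\alpha)$ of $(\tau,R)$ is read off from the normal form $\sum_{n=1}^d\alpha_n\delta(t-\sigma_n)$ ($\alpha_n\neq0$, $\sigma_1<\cdots<\sigma_d$) of $D^{(\tau,R)}(t)=\sum_{k\in\mathfrak{L}^\tau_M}a(R,k)\delta(t-\langle k,\tau\rangle)$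 (the impulse response truncated to $[0,|\tau|]$). Enumeration function $\Psi(\tau,R):\mathfrak{L}^\tau_M\to\{0,\ldots,d\}$: $k\mapsto0$ if $\langle k,\tau\rangle\notin\{\sigma_n\}$, else $k\mapsto1+\#\{n:\sigma_n<\langle k,\tau\rangle\}$. A model is generic if its enumeration function is injective and never $0$. *)

theory Defs
  imports Complex_Main
begin

text \<open>Vectors in R^(M+1) / Z_{>=0}^(M+1) are lists of length M+1, indexed 0..M.\<close>

definition is_model :: "nat \<Rightarrow> real list \<Rightarrow> real list \<Rightarrow> bool" where
  "is_model M \<tau> R \<longleftrightarrow> M \<ge> 1 \<and> length \<tau> = Suc M \<and> length R = Suc M \<and>
     (\<forall>n\<le>M. \<tau> ! n > 0) \<and> (\<forall>n\<le>M. -1 < R ! n \<and> R ! n < 1)"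

definition inner_kt :: "nat \<Rightarrow> nat list \<Rightarrow> real list \<Rightarrow> real" where
  "inner_kt M k \<tau> = (\<Sum>n\<le>M. real (k ! n) * \<tau> ! n)"

definition Lset :: "nat \<Rightarrow> nat list set" where
  "Lset M = {k. length k = Suc M \<and> k ! 0 = 1 \<and> (\<forall>n\<in>{1..M}. 0 < k ! n \<longrightarrow> 0 < k ! (n - 1))}"

definition Lset_tau :: "nat \<Rightarrow> real list \<Rightarrow> nat list set" where
  "Lset_tau M \<tau> = {k \<in> Lset M. inner_kt M k \<tau> \<le> (\<Sum>n\<le>M. \<tau> ! n)}"

definition ktil :: "nat \<Rightarrow> nat list \<Rightarrow> nat \<Rightarrow> nat" where
  "ktil M k n = (if n < M then k ! Suc n else 0)"

definition uvec :: "nat \<Rightarrow> nat list \<Rightarrow> nat \<Rightarrow> nat" where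
  "uvec M k n = min 1 (ktil M k n)"

definition Vset :: "nat \<Rightarrow> nat list \<Rightarrow> nat list set" where
  "Vset M k = {b. length b = Suc M \<and>
     (\<forall>n\<le>M. uvec M k n \<le> b ! n \<and> b ! n \<le> min (k ! n) (ktil M k n))}"

definition amp :: "nat \<Rightarrow> real list \<Rightarrow> nat list \<Rightarrow> real" where
  "amp M x k = (\<Sum>b\<in>Vset M k. \<Prod>n\<le>M.
      real (k ! n choose b ! n) * real ((ktil M k n - uvec M k n) choose (b ! n - uvec M k n))
      * (- (x ! n)) ^ (ktil M k n - b ! n) * (x ! n) ^ (k ! n - b ! n)
      * (1 - (x ! n)^2) ^ (b ! n))"

text \<open>Normal form of D = sum_k a(R,k) delta(t - <k,tau>): total coefficient at time t.\<close>
definition coefD :: "nat \<Rightarrow> real list \<Rightarrow> real list \<Rightarrow> real \<Rightarrow> real" where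
  "coefD M \<tau> R t = (\<Sum>k\<in>{k \<in> Lset_tau M \<tau>. inner_kt M k \<tau> = t}. amp M R k)"

definition suppD :: "nat \<Rightarrow> real list \<Rightarrow> real list \<Rightarrow> real set" where
  "suppD M \<tau> R = {t. (\<exists>k\<in>Lset_tau M \<tau>. inner_kt M k \<tau> = t) \<and> coefD M \<tau> R t \<noteq> 0}"

definition sigma_of :: "nat \<Rightarrow> real list \<Rightarrow> real list \<Rightarrow> real list" where
  "sigma_of M \<tau> R = sorted_list_of_set (suppD M \<tau> R)"

definition alpha_of :: "nat \<Rightarrow> real list \<Rightarrow> real list \<Rightarrow> real list" where
  "alpha_of M \<tau> R = map (coefD M \<tau> R) (sigma_of M \<tau> R)"

definition model_data :: "nat \<Rightarrow> real list \<Rightarrow> real list \<Rightarrow> real list \<times> real list" where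
  "model_data M \<tau> R = (sigma_of M \<tau> R, alpha_of M \<tau> R)"

definition Psi :: "nat \<Rightarrow> real list \<Rightarrow> real list \<Rightarrow> nat list \<Rightarrow> nat" where
  "Psi M \<tau> R k = (let s = sigma_of M \<tau> R; t = inner_kt M k \<tau> in
     if t \<notin> set s then 0 else 1 + card {n. n < length s \<and> s ! n < t})"

definition generic :: "nat \<Rightarrow> real list \<Rightarrow> real list \<Rightarrow> bool" where
  "generic M \<tau> R \<longleftrightarrow> inj_on (Psi M \<tau> R) (Lset_tau M \<tau>) \<and> (\<forall>k\<in>Lset_tau M \<tau>. Psi M \<tau> R k \<noteq> 0)"

end

theory Submission
  imports Defs
begin

definition pv :: "nat \<Rightarrow> nat \<Rightarrow> nat list" where
  "pv M n = map (\<lambda>j. if j \<le> n then 1 else 0) [0..<Suc M]"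

definition Wset :: "nat \<Rightarrow> real list \<Rightarrow> real set" where
  "Wset n \<tau> = {(\<Sum>j<n. real (c j) * \<tau>!j) | c. c 0 = (1::nat) \<and>
      (\<forall>j. 1 \<le> j \<and> j < n \<and> 0 < c j \<longrightarrow> 0 < c (j-1))}"

lemma Wset_cong:
  assumes "\<forall>j<n. \<tau>!j = \<tau>'!j"
  shows "Wset n \<tau> = Wset n \<tau>'"
proof -
  have "\<And>c. (\<Sum>j<n. real (c j) * \<tau>!j) = (\<Sum>j<n. real (c j) * \<tau>'!j)"
    by (rule sum.cong) (auto simp: assms)
  then show ?thesis unfolding Wset_def by simp
qed

lemma gen_inj:
  assumes "generic M \<tau> R"
  shows "inj_on (\<lambda>k. inner_kt M k \<tau>) (Lset_tau M \<tau>)"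
  unfolding inj_on_def
proof (intro ballI impI)
  fix x y assume x: "x \<in> Lset_tau M \<tau>" and y: "y \<in> Lset_tau M \<tau>"
    and e: "inner_kt M x \<tau> = inner_kt M y \<tau>"
  have "Psi M \<tau> R x = Psi M \<tau> R y" unfolding Psi_def using e by simp
  then show "x = y" using assms x y unfolding generic_def inj_on_def by blast
qed

lemma pv_nth: "j \<le> M \<Longrightarrow> pv M n ! j = (if j \<le> n then 1 else 0)"
  unfolding pv_def by (simp del: upt_Suc)

lemma pv_Lset: "pv M n \<in> Lset M"
  unfolding Lset_def by (auto simp: pv_nth) (simp add: pv_def)

lemma pv_time:
  assumes "n \<le> M"
  shows "inner_kt M (pv M n) \<tau> = (\<Sum>j\<le>n. \<tau>!j)"
proof -
  have "inner_kt M (pv M n) \<tau> = (\<Sum>j\<in>{..M}. if j \<in> {..n} then \<tau>!j else 0)"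
    unfolding inner_kt_def by (rule sum.cong) (auto simp: pv_nth)
  also have "\<dots> = sum (\<lambda>j. \<tau>!j) ({..M} \<inter> {..n})"
    by (rule sum.inter_restrict[symmetric]) simp
  also have "{..M} \<inter> {..n} = {..n}" using assms by auto
  finally show ?thesis .
qed

lemma model_pos: "is_model M \<tau> R \<Longrightarrow> j \<le> M \<Longrightarrow> 0 < \<tau>!j"
  unfolding is_model_def by auto

lemma pv_Lset_tau:
  assumes "is_model M \<tau> R" "n \<le> M"
  shows "pv M n \<in> Lset_tau M \<tau>"
proof -
  have "(\<Sum>j\<le>n. \<tau>!j) \<le> (\<Sum>j\<le>M. \<tau>!j)"
    by (rule sum_mono2) (use assms model_pos in \<open>auto intro: less_imp_le\<close>)
  then show ?thesis unfolding Lset_tau_def using pv_Lset pv_time[OF assms(2)] by auto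
qed

lemma prod_split_base:
  fixes n :: nat
  shows "(\<Prod>j\<le>n. (if j < n then f j else if j = n then c else 1)) = (\<Prod>j<n. f j) * (c::real)"
proof -
  have "(\<Prod>j\<le>n. (if j < n then f j else if j = n then c else 1))
      = (\<Prod>j<Suc n. (if j < n then f j else if j = n then c else 1))"
    by (simp add: lessThan_Suc_atMost)
  also have "\<dots> = (\<Prod>j<n. (if j < n then f j else if j = n then c else 1)) * c"
    by (simp add: prod.lessThan_Suc)
  also have "(\<Prod>j<n. (if j < n then f j else if j = n then c else 1)) = (\<Prod>j<n. f j)"
    by (rule prod.cong) auto
  finally show ?thesis .
qed

lemma prod_split:
  fixes n M :: nat
  assumes "n \<le> M"
  shows "(\<Prod>j\<le>M. (if j < n then f j else if j = n then c else 1)) = (\<Prod>j<n. f j) * (c::real)"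
  using assms
proof (induction M)
  case 0
  then show ?case using prod_split_base[of 0 f c] by simp
next
  case (Suc m)
  show ?case
  proof (cases "n = Suc m")
    case False
    then have "n \<le> m" using Suc.prems by simp
    then show ?thesis using Suc.IH by (simp add: prod.atMost_Suc)
  next
    case True
    then show ?thesis using prod_split_base[of "Suc m" f c] by simp
  qed
qed

lemma pv_amp:
  assumes "n \<le> M"
  shows "amp M x (pv M n) = (\<Prod>j<n. 1 - (x!j)^2) * x!n"
proof -
  define q where "q = map (\<lambda>j. if j < n then 1 else (0::nat)) [0..<Suc M]"
  have qn: "j \<le> M \<Longrightarrow> q ! j = (if j < n then 1 else 0)" for j
    unfolding q_def by (simp del: upt_Suc)
  have kt: "j \<le> M \<Longrightarrow> ktil M (pv M n) j = (if j < n then 1 else 0)" for j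
  proof (cases "j < M")
    case True
    then have "Suc j \<le> M" by simp
    then show ?thesis unfolding ktil_def using True pv_nth[of "Suc j" M n] by simp
  next
    case False
    then show ?thesis unfolding ktil_def using assms by simp
  qed
  have uv: "j \<le> M \<Longrightarrow> uvec M (pv M n) j = (if j < n then 1 else 0)" for j
    unfolding uvec_def using kt by auto
  have V: "Vset M (pv M n) = {q}"
  proof (rule set_eqI, rule iffI)
    fix b assume "b \<in> Vset M (pv M n)"
    then have lb: "length b = Suc M" and
      bb: "\<forall>j\<le>M. uvec M (pv M n) j \<le> b ! j \<and> b ! j \<le> min (pv M n ! j) (ktil M (pv M n) j)"
      unfolding Vset_def by auto
    have "b = q"
    proof (rule nth_equalityI)
      show "length b = length q" using lb by (simp add: q_def)
      fix j assume "j < length b"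
      then have j: "j \<le> M" using lb by simp
      show "b ! j = q ! j" using bb[rule_format, OF j] uv[OF j] kt[OF j] qn[OF j] pv_nth[OF j]
        by (auto split: if_splits)
    qed
    then show "b \<in> {q}" by simp
  next
    fix b assume "b \<in> {q}"
    then show "b \<in> Vset M (pv M n)"
      unfolding Vset_def using uv kt qn pv_nth by (auto simp: q_def)
  qed
  have "amp M x (pv M n) = (\<Prod>j\<le>M. (if j < n then 1 - (x!j)^2 else if j = n then x!n else 1))"
    unfolding amp_def V
    by (simp, rule prod.cong) (auto simp: qn kt uv pv_nth)
  also have "\<dots> = (\<Prod>j<n. 1 - (x!j)^2) * x!n" by (rule prod_split[OF assms])
  finally show ?thesis .
qed

lemma Lset_pos:
  assumes "k \<in> Lset M" "j \<le> M" "0 < k!j" "i \<le> j"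
  shows "0 < k!i"
  using assms(2-4)
proof (induction j arbitrary: i)
  case 0 then show ?case by simp
next
  case (Suc j)
  show ?case
  proof (cases "i = Suc j")
    case True then show ?thesis using Suc by simp
  next
    case False
    have pc: "\<forall>m\<in>{1..M}. 0 < k ! m \<longrightarrow> 0 < k ! (m - 1)" using assms(1) unfolding Lset_def by blast
    have "Suc j \<in> {1..M}" using Suc.prems(1) by simp
    then have "0 < k!j" using pc Suc.prems(2) by fastforce
    moreover have "i \<le> j" using False Suc.prems(3) by simp
    moreover have "j \<le> M" using Suc.prems(1) by simp
    ultimately show ?thesis using Suc.IH by blast
  qed
qed

lemma time_lb:
  assumes "is_model M \<tau> R" "k \<in> Lset M" "n \<le> j" "j \<le> M" "0 < k!j"
  shows "(\<Sum>i\<le>n. \<tau>!i) \<le> inner_kt M k \<tau>"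
proof -
  have "(\<Sum>i\<le>n. \<tau>!i) \<le> (\<Sum>i\<le>n. real (k!i) * \<tau>!i)"
  proof (rule sum_mono)
    fix i assume "i \<in> {..n}"
    then have "i \<le> j" using assms(3) by simp
    then have "0 < k!i" by (rule Lset_pos[OF assms(2,4,5)])
    then have "1 \<le> k!i" by simp
    have "0 < \<tau>!i" using model_pos[OF assms(1)] \<open>i \<le> j\<close> assms(4) by simp
    then show "\<tau>!i \<le> real (k!i) * \<tau>!i" using \<open>1 \<le> k!i\<close> by (simp add: mult_le_cancel_right2)
  qed
  also have "\<dots> \<le> (\<Sum>i\<le>M. real (k!i) * \<tau>!i)"
  proof (rule sum_mono2)
    show "{..n} \<subseteq> {..M}" using assms(3,4) by auto
    fix b assume "b \<in> {..M} - {..n}"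
    then have "0 < \<tau>!b" using model_pos[OF assms(1)] by simp
    then show "0 \<le> real (k!b) * \<tau>!b" by simp
  qed simp
  finally show ?thesis unfolding inner_kt_def .
qed

lemma set_sigma:
  assumes "is_model M \<tau> R" "generic M \<tau> R"
  shows "set (sigma_of M \<tau> R) = (\<lambda>k. inner_kt M k \<tau>) ` Lset_tau M \<tau>"
proof -
  have sub: "(\<lambda>k. inner_kt M k \<tau>) ` Lset_tau M \<tau> \<subseteq> set (sigma_of M \<tau> R)"
  proof
    fix t assume "t \<in> (\<lambda>k. inner_kt M k \<tau>) ` Lset_tau M \<tau>"
    then obtain k where k: "k \<in> Lset_tau M \<tau>" "t = inner_kt M k \<tau>" by auto
    then have "Psi M \<tau> R k \<noteq> 0" using assms(2) unfolding generic_def by auto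
    then show "t \<in> set (sigma_of M \<tau> R)" using k unfolding Psi_def Let_def
      by (auto split: if_splits)
  qed
  have "pv M 0 \<in> Lset_tau M \<tau>" by (rule pv_Lset_tau[OF assms(1)]) simp
  then have "inner_kt M (pv M 0) \<tau> \<in> (\<lambda>k. inner_kt M k \<tau>) ` Lset_tau M \<tau>" by (rule imageI)
  then have "inner_kt M (pv M 0) \<tau> \<in> set (sigma_of M \<tau> R)" using sub by (rule subsetD[rotated])
  then have "set (sigma_of M \<tau> R) \<noteq> {}" by auto
  then have fin: "finite (suppD M \<tau> R)"
  proof (rule contrapos_np)
    assume "infinite (suppD M \<tau> R)"
    then show "set (sigma_of M \<tau> R) = {}" unfolding sigma_of_def by simp
  qed
  then have "set (sigma_of M \<tau> R) = suppD M \<tau> R" unfolding sigma_of_def by simp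
  moreover have "suppD M \<tau> R \<subseteq> (\<lambda>k. inner_kt M k \<tau>) ` Lset_tau M \<tau>"
    unfolding suppD_def by auto
  ultimately show ?thesis using sub by auto
qed

lemma coef_at:
  assumes "generic M \<tau> R" "k \<in> Lset_tau M \<tau>"
  shows "coefD M \<tau> R (inner_kt M k \<tau>) = amp M R k"
proof -
  have "{k' \<in> Lset_tau M \<tau>. inner_kt M k' \<tau> = inner_kt M k \<tau>} = {k}"
    using gen_inj[OF assms(1)] assms(2) unfolding inj_on_def by blast
  then show ?thesis unfolding coefD_def by simp
qed

lemma W_char:
  assumes "is_model M \<tau> R" "generic M \<tau> R" "k \<in> Lset_tau M \<tau>" "n \<le> Suc M"
  shows "inner_kt M k \<tau> \<in> Wset n \<tau> \<longleftrightarrow> (\<forall>j. n \<le> j \<and> j \<le> M \<longrightarrow> k!j = 0)"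
proof
  assume "inner_kt M k \<tau> \<in> Wset n \<tau>"
  then obtain c where c0: "c 0 = (1::nat)"
    and cp: "\<forall>j. 1 \<le> j \<and> j < n \<and> 0 < c j \<longrightarrow> 0 < c (j-1)"
    and ce: "inner_kt M k \<tau> = (\<Sum>j<n. real (c j) * \<tau>!j)"
    unfolding Wset_def by auto
  have kL: "k \<in> Lset M" using assms(3) unfolding Lset_tau_def by auto
  show "\<forall>j. n \<le> j \<and> j \<le> M \<longrightarrow> k!j = 0"
  proof (cases "n = 0")
    case True
    have "0 < k!0" using kL unfolding Lset_def by simp
    then have "(\<Sum>i\<le>0. \<tau>!i) \<le> inner_kt M k \<tau>" using time_lb[OF assms(1) kL, of 0 0] by simp
    moreover have "0 < \<tau>!0" using model_pos[OF assms(1)] by simp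
    ultimately show ?thesis using ce True by simp
  next
    case False
    define k' where "k' = map (\<lambda>j. if j < n then c j else 0) [0..<Suc M]"
    have k'n: "j \<le> M \<Longrightarrow> k'!j = (if j < n then c j else 0)" for j
      unfolding k'_def by (simp del: upt_Suc)
    have k'L: "k' \<in> Lset M"
      unfolding Lset_def using False c0 cp k'n by (auto simp: k'_def)
    have "inner_kt M k' \<tau> = (\<Sum>j\<in>{..M}. if j \<in> {..<n} then real (c j) * \<tau>!j else 0)"
      unfolding inner_kt_def by (rule sum.cong) (auto simp: k'n)
    also have "\<dots> = sum (\<lambda>j. real (c j) * \<tau>!j) ({..M} \<inter> {..<n})"
      by (rule sum.inter_restrict[symmetric]) simp
    also have "{..M} \<inter> {..<n} = {..<n}" using assms(4) by auto
    finally have "inner_kt M k' \<tau> = inner_kt M k \<tau>" using ce by simp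
    then have k'T: "k' \<in> Lset_tau M \<tau>" using assms(3) k'L unfolding Lset_tau_def by auto
    have "k' = k" using gen_inj[OF assms(2)] k'T assms(3) \<open>inner_kt M k' \<tau> = inner_kt M k \<tau>\<close>
      unfolding inj_on_def by blast
    then show ?thesis using k'n by auto
  qed
next
  assume z: "\<forall>j. n \<le> j \<and> j \<le> M \<longrightarrow> k!j = 0"
  have kL: "k \<in> Lset M" using assms(3) unfolding Lset_tau_def by auto
  have "0 < k!0" using kL unfolding Lset_def by simp
  then have n0: "n \<noteq> 0" using z by auto
  have "inner_kt M k \<tau> = (\<Sum>j<n. real (k!j) * \<tau>!j)"
    unfolding inner_kt_def
    by (rule sum.mono_neutral_right) (use assms(4) z in auto)
  moreover have "k!0 = 1" "\<forall>j. 1 \<le> j \<and> j < n \<and> 0 < k!j \<longrightarrow> 0 < k!(j-1)"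
    using kL assms(4) unfolding Lset_def by auto
  ultimately show "inner_kt M k \<tau> \<in> Wset n \<tau>" unfolding Wset_def by blast
qed

lemma D_min:
  assumes "is_model M \<tau> R" "generic M \<tau> R" "n \<le> M"
  shows "(\<Sum>j\<le>n. \<tau>!j) \<in> set (sigma_of M \<tau> R) - Wset n \<tau>"
    "\<forall>t \<in> set (sigma_of M \<tau> R) - Wset n \<tau>. (\<Sum>j\<le>n. \<tau>!j) \<le> t"
proof -
  have p: "pv M n \<in> Lset_tau M \<tau>" using pv_Lset_tau assms by blast
  have "pv M n ! n \<noteq> 0" using pv_nth assms(3) by simp
  then have "inner_kt M (pv M n) \<tau> \<notin> Wset n \<tau>"
    using W_char[OF assms(1,2) p] assms(3) by auto
  moreover have "inner_kt M (pv M n) \<tau> \<in> set (sigma_of M \<tau> R)"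
    using set_sigma[OF assms(1,2)] p by auto
  ultimately show "(\<Sum>j\<le>n. \<tau>!j) \<in> set (sigma_of M \<tau> R) - Wset n \<tau>"
    using pv_time[OF assms(3)] by auto
  show "\<forall>t \<in> set (sigma_of M \<tau> R) - Wset n \<tau>. (\<Sum>j\<le>n. \<tau>!j) \<le> t"
  proof
    fix t assume "t \<in> set (sigma_of M \<tau> R) - Wset n \<tau>"
    then obtain k where k: "k \<in> Lset_tau M \<tau>" "t = inner_kt M k \<tau>" "t \<notin> Wset n \<tau>"
      using set_sigma[OF assms(1,2)] by auto
    then obtain j where j: "n \<le> j" "j \<le> M" "k!j \<noteq> 0"
      using W_char[OF assms(1,2) k(1)] assms(3) by auto
    have "k \<in> Lset M" using k(1) unfolding Lset_tau_def by auto
    then show "(\<Sum>j\<le>n. \<tau>!j) \<le> t" using time_lb[OF assms(1) _ j(1,2)] j(3) k(2) by simp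
  qed
qed

lemma D_empty:
  assumes "is_model M \<tau> R" "generic M \<tau> R"
  shows "set (sigma_of M \<tau> R) - Wset (Suc M) \<tau> = {}"
proof -
  { fix k assume k: "k \<in> Lset_tau M \<tau>"
    have "inner_kt M k \<tau> \<in> Wset (Suc M) \<tau>" using W_char[OF assms k] by simp }
  then show ?thesis using set_sigma[OF assms] by auto
qed

lemma sum_atMost_split: "(\<Sum>j\<le>(n::nat). f j) = (\<Sum>j<n. f j) + (f n :: real)"
proof -
  have "{..n} = insert n {..<n}" by auto
  then show ?thesis by (simp add: add.commute)
qed

lemma one_side:
  assumes m1: "is_model M \<tau> R" and m2: "is_model M' \<tau>' R'"
    and g1: "generic M \<tau> R" and g2: "generic M' \<tau>' R'"
    and eq: "sigma_of M \<tau> R = sigma_of M' \<tau>' R'"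
    and pre: "\<forall>n\<le>M. n \<le> M' \<longrightarrow> \<tau>!n = \<tau>'!n"
  shows "\<not> M < M'"
proof
  assume lt: "M < M'"
  have "\<forall>j<Suc M. \<tau>!j = \<tau>'!j" using pre lt by auto
  then have W: "Wset (Suc M) \<tau> = Wset (Suc M) \<tau>'" by (rule Wset_cong)
  have "set (sigma_of M' \<tau>' R') - Wset (Suc M) \<tau>' = {}"
    using D_empty[OF m1 g1] unfolding eq W .
  moreover have "(\<Sum>j\<le>Suc M. \<tau>'!j) \<in> set (sigma_of M' \<tau>' R') - Wset (Suc M) \<tau>'"
    using D_min(1)[OF m2 g2 Suc_leI[OF lt]] .
  ultimately show False by blast
qed

theorem corollary4p5:
  fixes M M' :: nat and \<tau> R \<tau>' R' :: "real list"
  assumes "is_model M \<tau> R" and "is_model M' \<tau>' R'"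
    and "generic M \<tau> R" and "generic M' \<tau>' R'"
    and "model_data M \<tau> R = model_data M' \<tau>' R'"
  shows "M = M' \<and> \<tau> = \<tau>' \<and> R = R'"
proof -
  note m1 = assms(1) and m2 = assms(2) and g1 = assms(3) and g2 = assms(4)
  have eq: "sigma_of M \<tau> R = sigma_of M' \<tau>' R'"
    and aeq: "alpha_of M \<tau> R = alpha_of M' \<tau>' R'"
    using assms(5) unfolding model_data_def by auto
  have ceq: "\<And>t. t \<in> set (sigma_of M \<tau> R) \<Longrightarrow> coefD M \<tau> R t = coefD M' \<tau>' R' t"
    using aeq eq unfolding alpha_of_def by (simp add: map_eq_conv)
  have IH: "n \<le> M \<Longrightarrow> n \<le> M' \<Longrightarrow> \<tau>!n = \<tau>'!n \<and> R!n = R'!n" for n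
  proof (induction n rule: less_induct)
    case (less n)
    have pre: "\<forall>j<n. \<tau>!j = \<tau>'!j \<and> R!j = R'!j" using less by auto
    have W: "Wset n \<tau> = Wset n \<tau>'" by (rule Wset_cong) (use pre in auto)
    let ?D = "set (sigma_of M \<tau> R) - Wset n \<tau>"
    have a1: "(\<Sum>j\<le>n. \<tau>!j) \<in> ?D" "\<forall>t\<in>?D. (\<Sum>j\<le>n. \<tau>!j) \<le> t"
      using D_min[OF m1 g1 less.prems(1)] by auto
    have a2: "(\<Sum>j\<le>n. \<tau>'!j) \<in> ?D" "\<forall>t\<in>?D. (\<Sum>j\<le>n. \<tau>'!j) \<le> t"
      using D_min[OF m2 g2 less.prems(2)] unfolding eq[symmetric] W[symmetric] by auto
    have s: "(\<Sum>j\<le>n. \<tau>!j) = (\<Sum>j\<le>n. \<tau>'!j)" using a1 a2 by (meson order_antisym)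
    have "(\<Sum>j<n. \<tau>!j) = (\<Sum>j<n. \<tau>'!j)" by (rule sum.cong) (use pre in auto)
    then have tn: "\<tau>!n = \<tau>'!n" using s by (simp add: sum_atMost_split)
    have p1: "pv M n \<in> Lset_tau M \<tau>" using pv_Lset_tau m1 less.prems by blast
    have p2: "pv M' n \<in> Lset_tau M' \<tau>'" using pv_Lset_tau m2 less.prems by blast
    have "coefD M \<tau> R (\<Sum>j\<le>n. \<tau>!j) = (\<Prod>j<n. 1 - (R!j)^2) * R!n"
      using coef_at[OF g1 p1] pv_time[OF less.prems(1)] pv_amp[OF less.prems(1)] by simp
    moreover have "coefD M' \<tau>' R' (\<Sum>j\<le>n. \<tau>!j) = (\<Prod>j<n. 1 - (R'!j)^2) * R'!n"
      using coef_at[OF g2 p2] pv_time[OF less.prems(2)] pv_amp[OF less.prems(2)] s by simp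
    moreover have "(\<Sum>j\<le>n. \<tau>!j) \<in> set (sigma_of M \<tau> R)" using a1 by auto
    then have "coefD M \<tau> R (\<Sum>j\<le>n. \<tau>!j) = coefD M' \<tau>' R' (\<Sum>j\<le>n. \<tau>!j)" by (rule ceq)
    ultimately have e: "(\<Prod>j<n. 1 - (R!j)^2) * R!n = (\<Prod>j<n. 1 - (R'!j)^2) * R'!n"
      by simp
    have pe: "(\<Prod>j<n. 1 - (R'!j)^2) = (\<Prod>j<n. 1 - (R!j)^2)" by (rule prod.cong) (use pre in auto)
    have "(\<Prod>j<n. 1 - (R!j)^2) \<noteq> 0"
    proof -
      { fix j assume "j \<in> {..<n}"
      then have "-1 < R!j" "R!j < 1" using m1 less.prems unfolding is_model_def by auto
      then have "(R!j)^2 < 1" by (simp add: abs_less_iff abs_square_less_1)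
      then have "1 - (R!j)^2 \<noteq> 0" by simp }
      then show ?thesis by (simp add: prod_zero_iff)
    qed
    then have "R!n = R'!n" using e pe by simp
    with tn show ?case by simp
  qed
  have "\<forall>n\<le>M. n \<le> M' \<longrightarrow> \<tau>!n = \<tau>'!n" using IH by blast
  then have "\<not> M < M'" by (rule one_side[OF m1 m2 g1 g2 eq])
  moreover have "\<forall>n\<le>M'. n \<le> M \<longrightarrow> \<tau>'!n = \<tau>!n" using IH by (metis)
  then have "\<not> M' < M" by (rule one_side[OF m2 m1 g2 g1 eq[symmetric]])
  ultimately have MM: "M = M'" by simp
  have l: "length \<tau> = Suc M" "length R = Suc M" "length \<tau>' = Suc M" "length R' = Suc M"
    using m1 m2 unfolding MM is_model_def by simp_all
  have "\<tau> = \<tau>'"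
  proof (rule nth_equalityI)
    show "length \<tau> = length \<tau>'" using l by simp
    fix i assume "i < length \<tau>"
    then have "i \<le> M" "i \<le> M'" using l MM by auto
    then show "\<tau>!i = \<tau>'!i" using IH by blast
  qed
  moreover have "R = R'"
  proof (rule nth_equalityI)
    show "length R = length R'" using l by simp
    fix i assume "i < length R"
    then have "i \<le> M" "i \<le> M'" using l MM by auto
    then show "R!i = R'!i" using IH by blast
  qed
  ultimately show ?thesis using MM by blast
qed

end
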